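(* Let $F=K_{a_1,\ldots,a_r}$ be an almost balanced complete $r$-partite graph with $r\ge 2$ and $a_1\ge\cdots\ge a_r\ge 1$, let $\ell=a_1+\cdots+a_r$, and let $m=m_{r,\ell}$. Then \[ \binom{\ell}{2}>m\sum_{k=1}^{r}\binom{a_k}{2}. \]
   Context: $K_{a_1,\ldots,a_r}$ is the complete $r$-partite graph with part sizes $a_1,\ldots,a_r$; it is almost balanced if it is not a complete graph (so $\ell\ge r+1$) and $\binom{a_1-a_r}{2}<a_r$. $m_{r,\ell}$ is the unique integer $k\ge r$ maximizing $f(k)=\frac{(k-1)(k-2)\cdots(k-r+1)}{k^{\ell-1}}$ over all integers $k\ge r$. *)

theory Defs
  imports Complex_Main
begin

definition f_rl :: "nat \<Rightarrow> nat \<Rightarrow> nat \<Rightarrow> real" where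
  "f_rl r l k = (\<Prod>i=1..<r. real k - real i) / real k ^ (l - 1)"

definition m_rl :: "nat \<Rightarrow> nat \<Rightarrow> nat" where
  "m_rl r l = (THE k. r \<le> k \<and> (\<forall>j. r \<le> j \<longrightarrow> f_rl r l j \<le> f_rl r l k))"

text \<open>Complete r-partite graph K_{a_1,...,a_r} given by part sizes a 1, ..., a r
  (with a_1 \<ge> ... \<ge> a_r).  It is a complete graph iff all parts have size 1.
  Almost balanced: not complete, and binom(a_1 - a_r, 2) < a_r.\<close>
definition almost_balanced :: "nat \<Rightarrow> (nat \<Rightarrow> nat) \<Rightarrow> bool" where
  "almost_balanced r a \<longleftrightarrow>
     \<not> (\<forall>i\<in>{1..r}. a i = 1) \<and> ((a 1 - a r) choose 2) < a r"

end

theory Submission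
  imports Defs
begin

lemma bern2:
  fixes x :: real assumes "x \<ge> 0"
  shows "1 + real n * x + real n * (real n - 1) / 2 * x^2 \<le> (1 + x)^n"
proof (induction n)
  case 0 then show ?case by simp
next
  case (Suc n)
  have "(1 + x)^(Suc n) = (1+x) * (1+x)^n" by simp
  also have "\<dots> \<ge> (1+x) * (1 + real n * x + real n * (real n - 1) / 2 * x^2)"
    using Suc assms by (intro mult_left_mono) auto
  finally have h: "(1 + x)^(Suc n) \<ge> (1+x) * (1 + real n * x + real n * (real n - 1) / 2 * x^2)" .
  have "(1+x) * (1 + real n * x + real n * (real n - 1) / 2 * x^2)
      = 1 + real (Suc n) * x + real (Suc n) * (real (Suc n) - 1) / 2 * x^2 + real n * (real n - 1) / 2 * x^3"
    by (simp add: field_simps power2_eq_square power3_eq_cube)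
  moreover have "real n * (real n - 1) / 2 * x^3 \<ge> 0"
  proof -
    have "real n * (real n - 1) \<ge> 0" by (cases n) auto
    then show ?thesis using assms by simp
  qed
  ultimately show ?case using h by linarith
qed

lemma prodrec:
  fixes x :: real
  shows "(\<Prod>i=1..<Suc q. x + 1 - real i) * (x - real q) = x * (\<Prod>i=1..<Suc q. x - real i)"
proof (induction q)
  case 0 then show ?case by simp
next
  case (Suc q)
  have e1: "(\<Prod>i=1..<Suc (Suc q). x + 1 - real i) = (\<Prod>i=1..<Suc q. x + 1 - real i) * (x - real q)"
    by (simp add: prod.atLeastLessThan_Suc)
  have e2: "(\<Prod>i=1..<Suc (Suc q). x - real i) = (\<Prod>i=1..<Suc q. x - real i) * (x - real (Suc q))"
    by (simp add: prod.atLeastLessThan_Suc)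
  show ?case unfolding e1 e2 using Suc by (simp add: algebra_simps)
qed

lemma G_pos:
  assumes "r \<le> k" shows "(\<Prod>i=1..<r. real k - real i) > 0"
  using assms by (intro prod_pos) auto

lemma f_pos: assumes "r \<le> k" "1 \<le> r" shows "f_rl r l k > 0"
  using G_pos[OF assms(1)] assms unfolding f_rl_def by simp

lemma ratio_id:
  assumes "Suc q \<le> k"
  shows "f_rl (Suc q) l (k+1) * ((real k - real q) * real (k+1)^(l-1))
       = f_rl (Suc q) l k * real k ^ (l - 1 + 1)"
proof -
  define G1 where "G1 = (\<Prod>i=1..<Suc q. real (k+1) - real i)"
  define G0 where "G0 = (\<Prod>i=1..<Suc q. real k - real i)"
  have pr: "G1 * (real k - real q) = real k * G0"
    unfolding G1_def G0_def of_nat_add of_nat_1 by (rule prodrec)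
  have k0: "real k > 0" using assms by simp
  have a: "f_rl (Suc q) l (k+1) = G1 / real (k+1)^(l-1)" unfolding f_rl_def G1_def ..
  have b: "f_rl (Suc q) l k = G0 / real k^(l-1)" unfolding f_rl_def G0_def ..
  have c: "real (k+1)^(l-1) > 0" by simp
  have "f_rl (Suc q) l (k+1) * ((real k - real q) * real (k+1)^(l-1)) = G1 * (real k - real q)"
    unfolding a using c by simp
  also have "\<dots> = real k * G0" by (rule pr)
  also have "\<dots> = f_rl (Suc q) l k * real k ^ (l - 1 + 1)"
    unfolding b using k0 by simp
  finally show ?thesis .
qed

definition psi :: "nat \<Rightarrow> nat \<Rightarrow> real \<Rightarrow> real" where
  "psi q u t = real u * ln t + (\<Sum>i=1..q. ln (1 - real i * t))"
definition dpsi :: "nat \<Rightarrow> nat \<Rightarrow> real \<Rightarrow> real" where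
  "dpsi q u t = real u / t - (\<Sum>i=1..q. real i / (1 - real i * t))"

lemma psi_deriv:
  assumes "0 < t" "real q * t < 1"
  shows "(psi q u has_real_derivative dpsi q u t) (at t)"
proof -
  have pos: "1 - real i * t > 0" if "i \<in> {1..q}" for i
  proof -
    have "real i * t \<le> real q * t" using that assms by (intro mult_right_mono) auto
    then show ?thesis using assms by linarith
  qed
  have d1: "((\<lambda>t. real u * ln t) has_real_derivative real u / t) (at t)"
    using assms by (auto intro!: derivative_eq_intros)
  have d2: "((\<lambda>t. ln (1 - real i * t)) has_real_derivative - (real i / (1 - real i * t))) (at t)"
    if "i \<in> {1..q}" for i
    using pos[OF that] by (auto intro!: derivative_eq_intros simp: field_simps)
  have d3: "((\<lambda>t. \<Sum>i=1..q. ln (1 - real i * t)) has_real_derivative (\<Sum>i=1..q. - (real i / (1 - real i * t)))) (at t)"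
    by (rule DERIV_sum) (use d2 in auto)
  show ?thesis unfolding psi_def[abs_def] dpsi_def
    using DERIV_add[OF d1 d3] by (simp add: sum_negf)
qed

lemma dpsi_strict:
  assumes "0 < x" "x < y" "real q * y < 1" "u \<ge> 1"
  shows "dpsi q u y < dpsi q u x"
proof -
  have a: "real u / y < real u / x" using assms by (intro divide_strict_left_mono) auto
  have b: "real i / (1 - real i * x) \<le> real i / (1 - real i * y)" if "i \<in> {1..q}" for i
  proof -
    have "real i * y \<le> real q * y" using that assms by (intro mult_right_mono) auto
    then have p: "1 - real i * y > 0" using assms by linarith
    have "real i * x \<le> real i * y" using assms by (intro mult_left_mono) auto
    then show ?thesis using p by (intro divide_left_mono mult_pos_pos) auto
  qed
  have "(\<Sum>i=1..q. real i / (1 - real i * x)) \<le> (\<Sum>i=1..q. real i / (1 - real i * y))"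
    by (rule sum_mono) (use b in auto)
  then show ?thesis unfolding dpsi_def using a by linarith
qed

lemma psi_three:
  assumes "0 < t3" "t3 < t2" "t2 < t1" "real q * t1 < 1" "u \<ge> 1"
    and "psi q u t2 \<le> psi q u t3"
  shows "psi q u t1 < psi q u t2"
proof -
  have D: "\<And>x. t3 \<le> x \<Longrightarrow> x \<le> t1 \<Longrightarrow> (psi q u has_real_derivative dpsi q u x) (at x)"
  proof -
    fix x assume "t3 \<le> x" "x \<le> t1"
    moreover have "real q * x \<le> real q * t1" using \<open>x \<le> t1\<close> by (intro mult_left_mono) auto
    ultimately show "(psi q u has_real_derivative dpsi q u x) (at x)"
      using assms by (intro psi_deriv) auto
  qed
  obtain z1 where z1: "t3 < z1" "z1 < t2" "psi q u t2 - psi q u t3 = (t2 - t3) * dpsi q u z1"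
    using MVT2[of t3 t2 "psi q u" "dpsi q u"] D assms by auto
  obtain z2 where z2: "t2 < z2" "z2 < t1" "psi q u t1 - psi q u t2 = (t1 - t2) * dpsi q u z2"
    using MVT2[of t2 t1 "psi q u" "dpsi q u"] D assms by auto
  have "dpsi q u z1 \<le> 0"
  proof (rule ccontr)
    assume "\<not> ?thesis"
    then have "(t2 - t3) * dpsi q u z1 > 0" using z1 by simp
    then show False using z1 assms by linarith
  qed
  moreover have "real q * z2 < 1"
  proof -
    have "real q * z2 \<le> real q * t1" using z2 by (intro mult_left_mono) auto
    then show ?thesis using assms by linarith
  qed
  then have "dpsi q u z2 < dpsi q u z1" using z1 z2 assms by (intro dpsi_strict) auto
  ultimately have "dpsi q u z2 < 0" by linarith
  then have "(t1 - t2) * dpsi q u z2 < 0" using z2 by (simp add: mult_pos_neg)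
  then show ?thesis using z2 by linarith
qed

lemma ln_f:
  assumes "Suc q \<le> k" "l = Suc q + u"
  shows "ln (f_rl (Suc q) l k) = psi q u (1 / real k)"
proof -
  have k0: "real k > 0" using assms by simp
  have pos: "real k - real i > 0" if "i \<in> {1..<Suc q}" for i using that assms by auto
  have "ln (f_rl (Suc q) l k) = ln (\<Prod>i=1..<Suc q. real k - real i) - ln (real k ^ (l-1))"
    unfolding f_rl_def using G_pos[OF assms(1)] k0 by (simp add: ln_div)
  also have "ln (\<Prod>i=1..<Suc q. real k - real i) = (\<Sum>i=1..<Suc q. ln (real k - real i))"
    by (rule ln_prod) (use pos in force)+
  also have "ln (real k ^ (l-1)) = real (q + u) * ln (real k)"
    using k0 assms by (simp add: ln_realpow)
  finally have e: "ln (f_rl (Suc q) l k) = (\<Sum>i=1..<Suc q. ln (real k - real i)) - real (q + u) * ln (real k)" .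
  have "psi q u (1 / real k) = real u * ln (1 / real k) + (\<Sum>i=1..q. ln (real k - real i) - ln (real k))"
  proof -
    have "ln (1 - real i * (1 / real k)) = ln (real k - real i) - ln (real k)" if "i \<in> {1..q}" for i
    proof -
      have "1 - real i * (1 / real k) = (real k - real i) / real k" using k0 by (simp add: field_simps)
      then show ?thesis using pos[of i] that k0 by (simp add: ln_div)
    qed
    then show ?thesis unfolding psi_def by (intro arg_cong2[where f="(+)"] refl sum.cong) auto
  qed
  also have "\<dots> = (\<Sum>i=1..q. ln (real k - real i)) - real (q + u) * ln (real k)"
    using k0 by (simp add: sum_subtractf ln_div algebra_simps)
  finally show ?thesis using e by (simp add: atLeastLessThanSuc_atLeastAtMost)
qed

lemma ratio_cmp:
  fixes q k l :: nat
  assumes "Suc q \<le> k"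
  defines "A \<equiv> (real k - real q) * real (k+1)^(l-1)" and "B \<equiv> real k ^ (l - 1 + 1)"
  shows "A > 0" "B > 0" "f_rl (Suc q) l (k+1) * A = f_rl (Suc q) l k * B"
    "f_rl (Suc q) l (k+1) < f_rl (Suc q) l k \<longleftrightarrow> B < A"
    "f_rl (Suc q) l (k+1) = f_rl (Suc q) l k \<longleftrightarrow> B = A"
    "f_rl (Suc q) l k \<le> f_rl (Suc q) l (k+1) \<longleftrightarrow> A \<le> B"
proof -
  show A: "A > 0" unfolding A_def using assms by simp
  show B: "B > 0" unfolding B_def using assms by simp
  show e: "f_rl (Suc q) l (k+1) * A = f_rl (Suc q) l k * B" unfolding A_def B_def by (rule ratio_id[OF assms(1)])
  have f0: "f_rl (Suc q) l k > 0" "f_rl (Suc q) l (k+1) > 0" using f_pos assms by auto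
  define f1 where "f1 = f_rl (Suc q) l (k+1)"
  define f0 where "f0 = f_rl (Suc q) l k"
  have e': "f1 * A = f0 * B" using e unfolding f1_def f0_def .
  have p0: "f0 > 0" "f1 > 0" using f0 unfolding f0_def f1_def by auto
  have "(f1 < f0) = (f1 * A < f0 * A)" using A by simp
  also have "\<dots> = (f0 * B < f0 * A)" using e' by simp
  also have "\<dots> = (B < A)" using p0 by simp
  finally show "f_rl (Suc q) l (k+1) < f_rl (Suc q) l k \<longleftrightarrow> B < A" unfolding f1_def f0_def .
  have "(f1 = f0) = (f1 * A = f0 * A)" using A by simp
  also have "\<dots> = (f0 * B = f0 * A)" using e' by simp
  also have "\<dots> = (B = A)" using p0 by simp
  finally show "f_rl (Suc q) l (k+1) = f_rl (Suc q) l k \<longleftrightarrow> B = A" unfolding f1_def f0_def .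
  have "(f0 \<le> f1) = (f0 * A \<le> f1 * A)" using A by simp
  also have "\<dots> = (f0 * A \<le> f0 * B)" using e' by simp
  also have "\<dots> = (A \<le> B)" using p0 by simp
  finally show "f_rl (Suc q) l k \<le> f_rl (Suc q) l (k+1) \<longleftrightarrow> A \<le> B" unfolding f1_def f0_def .
qed

lemma decr_lin:
  assumes "Suc q \<le> k" "l = Suc q + u" "real (q + u) * real q < real u * real k"
  shows "f_rl (Suc q) l (k+1) < f_rl (Suc q) l k"
proof -
  have k0: "real k > 0" using assms by simp
  have "1 + real (q+u) * (1 / real k) \<le> (1 + 1 / real k) ^ (q+u)"
  proof (rule Bernoulli_inequality)
    have "0 \<le> 1 / real k" by simp
    then show "-1 \<le> 1 / real k" by linarith
  qed
  then have "real k ^ (q+u) * (1 + real (q+u) * (1 / real k)) \<le> real k ^ (q+u) * (1 + 1 / real k) ^ (q+u)"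
    using k0 by (intro mult_left_mono) auto
  also have "\<dots> = real (k+1) ^ (q+u)"
    using k0 by (simp add: power_mult_distrib[symmetric] field_simps)
  finally have b: "real k ^ (q+u) * (1 + real (q+u) / real k) \<le> real (k+1) ^ (q+u)" by simp
  have qk: "real k - real q > 0" using assms by simp
  have "real k ^ (q+u+1) < (real k - real q) * (real k ^ (q+u) * (1 + real (q+u) / real k))"
  proof -
    have "(real k - real q) * (1 + real (q+u) / real k) = (real k * real k + real u * real k - real (q+u) * real q) / real k"
      using k0 by (simp add: field_simps)
    also have "\<dots> > real k" using assms k0 by (simp add: field_simps)
    finally have "real k < (real k - real q) * (1 + real (q+u) / real k)" .
    then have "real k ^ (q+u) * real k < real k ^ (q+u) * ((real k - real q) * (1 + real (q+u) / real k))"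
      using k0 by (intro mult_strict_left_mono) auto
    then show ?thesis by (simp add: algebra_simps)
  qed
  also have "\<dots> \<le> (real k - real q) * real (k+1) ^ (q+u)"
    using b qk by (intro mult_left_mono) auto
  finally show ?thesis using ratio_cmp(4)[OF assms(1), of l] assms by simp
qed

lemma f_eventually_le:
  assumes "Suc q \<le> k" "l = Suc q + u" "u \<ge> 1" "(q+u)*q + Suc q \<le> k" "k \<le> j"
  shows "f_rl (Suc q) l j \<le> f_rl (Suc q) l k"
  using assms(5)
proof (induction j rule: dec_induct)
  case base then show ?case by simp
next
  case (step n)
  have "real (q + u) * real q < real u * real n"
  proof -
    have "(q+u)*q < n" using step assms by simp
    then have "real ((q+u)*q) < real n" by (simp only: of_nat_less_iff)
    also have "\<dots> \<le> real u * real n"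
    proof -
      have "1 \<le> real u" using assms by simp
      then show ?thesis using mult_right_mono[of 1 "real u" "real n"] by simp
    qed
    finally show ?thesis by simp
  qed
  then have "f_rl (Suc q) l (n+1) < f_rl (Suc q) l n"
    using step assms by (intro decr_lin[where u=u]) auto
  then show ?case using step by simp
qed

lemma m_char:
  assumes "q \<ge> 1" "u \<ge> 1" "l = Suc q + u"
  shows "Suc q \<le> m_rl (Suc q) l \<and> (\<forall>j. Suc q \<le> j \<longrightarrow> f_rl (Suc q) l j \<le> f_rl (Suc q) l (m_rl (Suc q) l))"
proof -
  let ?f = "f_rl (Suc q) l"
  define N where "N = (q+u)*q + Suc q"
  define M where "M = Max (?f ` {Suc q..N})"
  have fin: "finite (?f ` {Suc q..N})" "?f ` {Suc q..N} \<noteq> {}" unfolding N_def by auto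
  obtain k where k: "k \<in> {Suc q..N}" "?f k = M" using Max_in[OF fin] unfolding M_def by auto
  have kmax: "?f j \<le> ?f k" if "Suc q \<le> j" for j
  proof (cases "j \<le> N")
    case True then show ?thesis using k that fin unfolding M_def by auto
  next
    case False
    then have "?f j \<le> ?f N" using assms by (intro f_eventually_le[where u=u]) (auto simp: N_def)
    also have "?f N \<le> ?f k" using k fin unfolding M_def N_def by auto
    finally show ?thesis .
  qed
  have uniq: "k' = k" if k': "Suc q \<le> k'" "\<forall>j. Suc q \<le> j \<longrightarrow> ?f j \<le> ?f k'" for k'
  proof -
    have gen: False if a: "Suc q \<le> a" "a < b" "\<forall>j. Suc q \<le> j \<longrightarrow> ?f j \<le> ?f a"
      "\<forall>j. Suc q \<le> j \<longrightarrow> ?f j \<le> ?f b" for a b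
    proof -
      have eq: "?f a = ?f b" using a by (meson order.antisym order.trans less_imp_le)
      show False
      proof (cases "b = a + 1")
        case True
        then have "?f (a+1) = ?f a" using eq by simp
        then have "real a ^ (l - 1 + 1) = (real a - real q) * real (a+1)^(l-1)"
          using ratio_cmp(5)[OF a(1), of l] by simp
        then have "real (a ^ (l - 1 + 1)) = real ((a - q) * (a+1)^(l-1))"
          using a by (simp add: of_nat_diff)
        then have ne: "a ^ (l - 1 + 1) = (a - q) * (a+1)^(l-1)" by (simp only: of_nat_eq_iff)
        have "(a+1) dvd a ^ (l - 1 + 1)" unfolding ne using assms by (simp add: dvd_power)
        moreover have "coprime (a+1) (a ^ (l - 1 + 1))" by simp
        ultimately have "a + 1 = 1" by (meson coprime_common_divisor_nat dvd_refl)
        then show False using a assms by simp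
      next
        case False
        then have ab: "a + 1 < b" using a by simp
        have apos: "real a > 0" using a by simp
        have "?f (a+1) \<le> ?f b" using a by simp
        then have "ln (?f (a+1)) \<le> ln (?f b)" using f_pos a ab by simp
        then have h: "psi q u (1 / real (a+1)) \<le> psi q u (1 / real b)"
          using ln_f[OF _ assms(3)] a ab by simp
        have "psi q u (1 / real a) < psi q u (1 / real (a+1))"
        proof (rule psi_three[OF _ _ _ _ assms(2) h])
          show "0 < 1 / real b" using ab by simp
          show "1 / real b < 1 / real (a+1)" using ab apos by (simp add: frac_less2)
          show "1 / real (a+1) < 1 / real a" using apos by (simp add: frac_less2)
          show "real q * (1 / real a) < 1" using a apos by (simp add: field_simps)
        qed
        then have "ln (?f a) < ln (?f (a+1))" using ln_f[OF _ assms(3)] a by simp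
        then have "?f a < ?f (a+1)" using f_pos a by simp
        moreover have "?f (a+1) \<le> ?f a" using a by simp
        ultimately show False by simp
      qed
    qed
    show ?thesis
    proof (rule ccontr)
      assume "k' \<noteq> k"
      then have "k' < k \<or> k < k'" by arith
      then show False
      proof
        assume "k' < k" then show False using gen[of k' k] k' k kmax by auto
      next
        assume "k < k'" then show False using gen[of k k'] k' k kmax by auto
      qed
    qed
  qed
  have "m_rl (Suc q) l = k"
    unfolding m_rl_def
  proof (rule the_equality)
    show "Suc q \<le> k \<and> (\<forall>j. Suc q \<le> j \<longrightarrow> ?f j \<le> ?f k)" using k kmax by auto
  next
    fix k' assume "Suc q \<le> k' \<and> (\<forall>j. Suc q \<le> j \<longrightarrow> ?f j \<le> ?f k')"
    then show "k' = k" using uniq by auto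
  qed
  then show ?thesis using k kmax by auto
qed

lemma hquad:
  fixes a b c X X0 :: real
  shows "2*(a+X)*(b-X) - c*X = (2*(a+X0)*(b-X0) - c*X0) + (2*(b-X0) - 2*(a+X0) - c)*(X-X0) - 2*(X-X0)^2"
  by (simp add: algebra_simps power2_eq_square)

lemma hneg:
  fixes a b c X X0 :: real
  assumes "2*(a+X0)*(b-X0) - c*X0 < 0" "2*(b-X0) - 2*(a+X0) - c \<le> 0" "X0 \<le> X"
  shows "2*(a+X)*(b-X) - c*X < 0"
proof -
  have "(2*(b-X0) - 2*(a+X0) - c)*(X-X0) \<le> 0" using assms by (simp add: mult_nonpos_nonneg)
  moreover have "2*(X-X0)^2 \<ge> 0" by simp
  ultimately show ?thesis using hquad[of a X b c X0] assms by linarith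
qed

lemma core_A:
  fixes q u j :: real
  assumes "q \<ge> 1" "u \<ge> 1" "j \<ge> 0"
    and P: "2*(q+j)*(q^2 - u*j) - (q+u)*(q+u-1)*j \<ge> 0"
  shows "2*u*(q+1+j) < (q+1+u)*(q+u)"
proof (rule ccontr)
  assume "\<not> ?thesis"
  then have c: "2*u*(q+1+j) \<ge> (q+1+u)*(q+u)" by simp
  define X0 where "X0 = (q^2+u^2+q-u)/2"
  define X where "X = u*j"
  have XX: "X0 \<le> X" using c unfolding X0_def X_def by (simp add: algebra_simps power2_eq_square)
  have h0: "2*(q*u+X0)*(q^2-X0) - (q+u)*(q+u-1)*X0 = -((q+u-1)*u*(u*q+u^2+q-u))"
    unfolding X0_def by (simp add: field_simps power2_eq_square)
  have "u*q+u^2+q-u > 0"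
  proof -
    have "u^2 \<ge> u" using assms by (simp add: power2_eq_square)
    moreover have "u*q > 0" using assms by simp
    ultimately show ?thesis using assms by linarith
  qed
  moreover have "(q+u-1)*u > 0" using assms by simp
  ultimately have h0': "2*(q*u+X0)*(q^2-X0) - (q+u)*(q+u-1)*X0 < 0" unfolding h0
    by (simp add: mult_pos_pos)
  have d0: "2*(q^2-X0) - 2*(q*u+X0) - (q+u)*(q+u-1) = -2*u^2 - q + 3*u - 2*q*u - (q+u)^2"
    unfolding X0_def by (simp add: field_simps power2_eq_square)
  have "-2*u^2 - q + 3*u - 2*q*u - (q+u)^2 \<le> 0"
  proof -
    have "u^2 \<ge> u" using assms by (simp add: power2_eq_square)
    moreover have "q*u \<ge> u" using assms by simp
    moreover have "(q+u)^2 \<ge> 0" by simp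
    ultimately show ?thesis using assms by linarith
  qed
  then have d0': "2*(q^2-X0) - 2*(q*u+X0) - (q+u)*(q+u-1) \<le> 0" unfolding d0 .
  have "2*(q*u+X)*(q^2-X) - (q+u)*(q+u-1)*X < 0" by (rule hneg[OF h0' d0' XX])
  moreover have "2*(q*u+X)*(q^2-X) - (q+u)*(q+u-1)*X = u * (2*(q+j)*(q^2 - u*j) - (q+u)*(q+u-1)*j)"
    unfolding X_def by (simp add: algebra_simps)
  moreover have "u * (2*(q+j)*(q^2 - u*j) - (q+u)*(q+u-1)*j) \<ge> 0" using P assms by simp
  ultimately show False by linarith
qed

lemma polyQB:
  fixes s v :: real assumes "s \<ge> 0" "v \<ge> 0"
  shows "0 < 64448 + 126752*v + 96608*v^2 + 35424*v^3 + 6144*v^4 + 384*v^5 + 395168*s + 734624*s*v + 543056*s*v^2 + 205680*s*v^3 + 43008*s*v^4 + 4928*s*v^5 + 256*s*v^6 + 968000*s^2 + 1609824*s^2*v + 1050400*s^2*v^2 + 343376*s^2*v^3 + 59008*s^2*v^4 + 4896*s^2*v^5 + 128*s^2*v^6 + 1267056*s^3 + 1799168*s^3*v + 966600*s^3*v^2 + 244584*s^3*v^3 + 28800*s^3*v^4 + 1200*s^3*v^5 + 984540*s^4 + 1133066*s^4*v + 462550*s^4*v^2 + 78822*s^4*v^3 + 4640*s^4*v^4 + 469794*s^5 + 407598*s^5*v + 111209*s^5*v^2 + 9439*s^5*v^3 + 135334*s^6 + 78191*s^6*v + 10603*s^6*v^2 + 21610*s^7 + 6200*s^7*v + 1468*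s^8"
  using assms by (intro add_pos_nonneg add_nonneg_nonneg mult_nonneg_nonneg zero_le_power) auto

lemma polyDB:
  fixes s v :: real assumes "s \<ge> 0" "v \<ge> 0"
  shows "0 < 1760 + 2268*v + 1076*v^2 + 224*v^3 + 16*v^4 + 4688*s + 4644*s*v + 1484*s*v^2 + 152*s*v^3 + 4392*s^2 + 2943*s^2*v + 473*s^2*v^2 + 1756*s^3 + 594*s^3*v + 256*s^4"
  using assms by (intro add_pos_nonneg add_nonneg_nonneg mult_nonneg_nonneg zero_le_power) auto

lemma idQB:
  fixes s v :: real
  defines "q \<equiv> s + 1" and "u \<equiv> s + 2 + v"
  defines "r \<equiv> q + 1"
  defines "K \<equiv> 16*u^2 + 24*r*u + r^2" and "N \<equiv> r*u*(15*r^2 + 8*r*u - 16*r - 16*u)"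
  shows "2*(q*u*K+N)*(q^2*K-N) - (q+u)*(q+u-1)*N*K = -(64448 + 126752*v + 96608*v^2 + 35424*v^3 + 6144*v^4 + 384*v^5 + 395168*s + 734624*s*v + 543056*s*v^2 + 205680*s*v^3 + 43008*s*v^4 + 4928*s*v^5 + 256*s*v^6 + 968000*s^2 + 1609824*s^2*v + 1050400*s^2*v^2 + 343376*s^2*v^3 + 59008*s^2*v^4 + 4896*s^2*v^5 + 128*s^2*v^6 + 1267056*s^3 + 1799168*s^3*v + 966600*s^3*v^2 + 244584*s^3*v^3 + 28800*s^3*v^4 + 1200*s^3*v^5 + 984540*s^4 + 1133066*s^4*v + 462550*s^4*v^2 + 78822*s^4*v^3 + 4640*s^4*v^4 + 469794*s^5 + 407598*s^5*v + 111209*s^5*v^2 + 9439*s^5*v^3 + 135334*s^6 + 78191*s^6*v + 10603*s^6*v^2 + 21610*s^7 + 6200*s^7*v + 1468*s^8)"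
  unfolding q_def u_def r_def K_def N_def by algebra

lemma idDB:
  fixes s v :: real
  defines "q \<equiv> s + 1" and "u \<equiv> s + 2 + v"
  defines "r \<equiv> q + 1"
  defines "K \<equiv> 16*u^2 + 24*r*u + r^2" and "N \<equiv> r*u*(15*r^2 + 8*r*u - 16*r - 16*u)"
  shows "2*(q^2*K-N) - 2*(q*u*K+N) - (q+u)*(q+u-1)*K = -(1760 + 2268*v + 1076*v^2 + 224*v^3 + 16*v^4 + 4688*s + 4644*s*v + 1484*s*v^2 + 152*s*v^3 + 4392*s^2 + 2943*s^2*v + 473*s^2*v^2 + 1756*s^3 + 594*s^3*v + 256*s^4)"
  unfolding q_def u_def r_def K_def N_def by algebra

lemma core_B:
  fixes q u j :: real
  assumes "q \<ge> 1" "u \<ge> q + 1" "j \<ge> 0"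
    and P: "2*(q+j)*(q^2 - u*j) - (q+u)*(q+u-1)*j \<ge> 0"
  shows "(q+1+j)*(16*u^2 + 24*(q+1)*u + (q+1)^2) < 16*(q+1)*((q+1+u)*(q+u))"
proof (rule ccontr)
  define r where "r = q + 1"
  define K where "K = 16*u^2 + 24*r*u + r^2"
  define N where "N = r*u*(15*r^2 + 8*r*u - 16*r - 16*u)"
  define s where "s = q - 1"
  define v where "v = u - q - 1"
  have s0: "s \<ge> 0" and v0: "v \<ge> 0" using assms unfolding s_def v_def by auto
  have qs: "q = s + 1" and us: "u = s + 2 + v" unfolding s_def v_def by auto
  assume "\<not> ?thesis"
  then have c: "(r+j)*K \<ge> 16*r*((r+u)*(r+u-1))" unfolding r_def K_def by (simp add: algebra_simps)
  have K0: "K > 0" unfolding K_def r_def using assms by (simp add: add_pos_nonneg)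
  define X where "X = u*j"
  have "(r*u + X)*K = u*((r+j)*K)" unfolding X_def by (simp add: algebra_simps)
  also have "\<dots> \<ge> u*(16*r*((r+u)*(r+u-1)))" using c assms by (intro mult_left_mono) auto
  finally have "(r*u + X)*K \<ge> u*(16*r*((r+u)*(r+u-1)))" .
  moreover have "u*(16*r*((r+u)*(r+u-1))) - r*u*K = N" unfolding K_def N_def by (simp add: algebra_simps power2_eq_square)
  ultimately have "X * K \<ge> N" by (simp add: algebra_simps)
  then have XX: "N / K \<le> X" using K0 by (simp add: pos_divide_le_eq)
  have e1: "K^2 * (2*(q*u+N/K)*(q^2-N/K) - (q+u)*(q+u-1)*(N/K)) = 2*(q*u*K+N)*(q^2*K-N) - (q+u)*(q+u-1)*N*K"
    using K0 by (simp add: field_simps power2_eq_square)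
  have e2: "K * (2*(q^2-N/K) - 2*(q*u+N/K) - (q+u)*(q+u-1)) = 2*(q^2*K-N) - 2*(q*u*K+N) - (q+u)*(q+u-1)*K"
    using K0 by (simp add: field_simps)
  have i1: "2*(q*u*K+N)*(q^2*K-N) - (q+u)*(q+u-1)*N*K < 0"
    unfolding N_def K_def r_def qs us idQB using polyQB[OF s0 v0] by linarith
  have i2: "2*(q^2*K-N) - 2*(q*u*K+N) - (q+u)*(q+u-1)*K < 0"
    unfolding N_def K_def r_def qs us idDB using polyDB[OF s0 v0] by linarith
  have h0: "2*(q*u+N/K)*(q^2-N/K) - (q+u)*(q+u-1)*(N/K) < 0"
  proof -
    have "K^2 > 0" using K0 by simp
    then show ?thesis using e1 i1 by (metis mult_less_0_iff not_less_iff_gr_or_eq)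
  qed
  have d0: "2*(q^2-N/K) - 2*(q*u+N/K) - (q+u)*(q+u-1) \<le> 0"
  proof -
    have "K * (2*(q^2-N/K) - 2*(q*u+N/K) - (q+u)*(q+u-1)) < 0" using e2 i2 by simp
    then show ?thesis using K0 by (simp add: mult_less_0_iff)
  qed
  have "2*(q*u+X)*(q^2-X) - (q+u)*(q+u-1)*X < 0" by (rule hneg[OF h0 d0 XX])
  moreover have "2*(q*u+X)*(q^2-X) - (q+u)*(q+u-1)*X = u * (2*(q+j)*(q^2 - u*j) - (q+u)*(q+u-1)*j)"
    unfolding X_def by (simp add: algebra_simps)
  moreover have "u * (2*(q+j)*(q^2 - u*j) - (q+u)*(q+u-1)*j) \<ge> 0" using P assms by simp
  ultimately show False by linarith
qed

lemma P_m:
  assumes "q \<ge> 1" "u \<ge> 1" "l = Suc q + u"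
  defines "j \<equiv> real (m_rl (Suc q) l) - real (Suc q)"
  shows "j \<ge> 0 \<and> 2*(real q+j)*(real q^2 - real u*j) - (real q+real u)*(real q+real u-1)*j \<ge> 0"
proof -
  define m where "m = m_rl (Suc q) l"
  have mc: "Suc q \<le> m" "\<And>i. Suc q \<le> i \<Longrightarrow> f_rl (Suc q) l i \<le> f_rl (Suc q) l m"
    using m_char[OF assms(1-3)] unfolding m_def by auto
  have j0: "j \<ge> 0" unfolding j_def m_def[symmetric] using mc by simp
  show ?thesis
  proof (cases "m = Suc q")
    case True
    then have "j = 0" unfolding j_def m_def by simp
    then show ?thesis by simp
  next
    case False
    define k where "k = m - 1"
    have k1: "Suc q \<le> k" "k + 1 = m" using False mc unfolding k_def by auto
    have "f_rl (Suc q) l k \<le> f_rl (Suc q) l (k+1)" using mc k1 by simp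
    then have A: "(real k - real q) * real (k+1)^(l-1) \<le> real k ^ (l - 1 + 1)"
      using ratio_cmp(6)[OF k1(1), of l] by simp
    define p where "p = q + u"
    have lp: "l - 1 = p" unfolding p_def using assms by simp
    have kpos: "real k > 0" using k1 by simp
    have kq: "real k - real q > 0" using k1 by simp
    have "1 + real p * (1/real k) + real p * (real p - 1) / 2 * (1/real k)^2 \<le> (1 + 1/real k)^p"
      by (rule bern2) simp
    then have "real k ^ p * (1 + real p * (1/real k) + real p * (real p - 1) / 2 * (1/real k)^2) \<le> real k ^ p * (1 + 1/real k)^p"
      using kpos by (intro mult_left_mono) auto
    also have "\<dots> = real (k+1) ^ p" using kpos by (simp add: power_mult_distrib[symmetric] field_simps)
    finally have B: "real k ^ p * (1 + real p * (1/real k) + real p * (real p - 1) / 2 * (1/real k)^2) \<le> real (k+1) ^ p" .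
    have "(real k - real q) * (real k ^ p * (1 + real p * (1/real k) + real p * (real p - 1) / 2 * (1/real k)^2))
        \<le> (real k - real q) * real (k+1) ^ p" using B kq by (intro mult_left_mono) auto
    also have "\<dots> \<le> real k ^ p * real k" using A unfolding lp by (simp add: mult.commute)
    finally have C: "real k ^ p * ((real k - real q) * (1 + real p * (1/real k) + real p * (real p - 1) / 2 * (1/real k)^2)) \<le> real k ^ p * real k"
      by (simp add: algebra_simps)
    have "real k ^ p > 0" using kpos by simp
    then have D: "(real k - real q) * (1 + real p * (1/real k) + real p * (real p - 1) / 2 * (1/real k)^2) \<le> real k"
      using C by (simp add: mult_le_cancel_left_pos)
    have "2 * real k ^ 2 * ((real k - real q) * (1 + real p * (1/real k) + real p * (real p - 1) / 2 * (1/real k)^2))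
        = (real k - real q) * (2 * real k^2 + 2 * real p * real k + real p * (real p - 1))"
      using kpos by (simp add: field_simps power2_eq_square)
    moreover have "2 * real k ^ 2 * ((real k - real q) * (1 + real p * (1/real k) + real p * (real p - 1) / 2 * (1/real k)^2))
        \<le> 2 * real k ^ 2 * real k" using D kpos by (intro mult_left_mono) auto
    ultimately have E: "(real k - real q) * (2 * real k^2 + 2 * real p * real k + real p * (real p - 1)) \<le> 2 * real k ^ 2 * real k"
      by linarith
    have jk: "j = real k - real q" unfolding j_def m_def[symmetric] using k1 by auto
    have "2*(real q+j)*(real q^2 - real u*j) - (real q+real u)*(real q+real u-1)*j
        = 2 * real k ^ 2 * real k - (real k - real q) * (2 * real k^2 + 2 * real p * real k + real p * (real p - 1))"
      unfolding jk p_def by (simp add: algebra_simps power2_eq_square)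
    then show ?thesis using E j0 by simp
  qed
qed

lemma choose2_real: "real (n choose 2) = real n * (real n - 1) / 2"
proof -
  have "2 * (n choose 2) = n * (n - 1)"
  proof (induction n)
    case 0 then show ?case by simp
  next
    case (Suc n)
    have "Suc n choose 2 = (n choose 1) + (n choose 2)"
      using binomial_Suc_Suc[of n 1] by (simp add: numeral_2_eq_2)
    then have "2 * (Suc n choose 2) = 2 * n + n * (n - 1)" using Suc by simp
    also have "\<dots> = Suc n * (Suc n - 1)" by (cases n) (auto simp: algebra_simps)
    finally show ?case .
  qed
  then have "real (2 * (n choose 2)) = real (n * (n - 1))" by simp
  then have "2 * real (n choose 2) = real n * (real n - 1)" by (cases n) (auto simp: of_nat_diff algebra_simps)
  then show ?thesis by simp
qed



lemma KT_id:
  fixes L R C E :: real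
  shows "16*(L-R)^2 + 24*R*(L-R) + R^2 - 16 * R * ((2 * C + E - 1) * L - R * C * (C + E))
     = (4*(L - R * C) - R * (2 * E - 1))^2 + 4 * R^2 * (2 * C - 2 - E * (E - 1))"
  by algebra

theorem lemma5p2:
  fixes r :: nat and a :: "nat \<Rightarrow> nat"
  assumes "r \<ge> 2"
    and "\<forall>i\<in>{1..r}. a i \<ge> 1"
    and "\<forall>i j. 1 \<le> i \<and> i \<le> j \<and> j \<le> r \<longrightarrow> a j \<le> a i"
    and "almost_balanced r a"
  shows "(\<Sum>k=1..r. a k) choose 2 > m_rl r (\<Sum>k=1..r. a k) * (\<Sum>k=1..r. a k choose 2)"
proof -
  define l where "l = (\<Sum>k=1..r. a k)"
  define q where "q = r - 1"
  have rq: "r = Suc q" and q1: "q \<ge> 1" using assms(1) unfolding q_def by auto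
  define c where "c = a r"
  define D where "D = a 1 - a r"
  have bnd: "c \<le> a i \<and> a i \<le> c + D" if "i \<in> {1..r}" for i
  proof -
    have "a r \<le> a i" "a i \<le> a 1" using assms(3) that by auto
    then show ?thesis unfolding c_def D_def by arith
  qed
  have c1: "c \<ge> 1" using assms(2) unfolding c_def using assms(1) by auto
  have ab: "\<not> (\<forall>i\<in>{1..r}. a i = 1)" "(D choose 2) < c"
    using assms(4) unfolding almost_balanced_def D_def c_def by auto
  have DD: "real D * (real D - 1) \<le> 2 * real c - 2"
  proof -
    have "(D choose 2) + 1 \<le> c" using ab(2) by simp
    then have "real (D choose 2) + 1 \<le> real c" by (metis of_nat_1 of_nat_add of_nat_le_iff)
    then have "real (D choose 2) \<le> real c - 1" by simp
    then show ?thesis unfolding choose2_real by simp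
  qed
  have lge: "l \<ge> r" unfolding l_def using sum_mono[of "{1..r}" "\<lambda>_. 1" a] assms(2) by auto
  obtain i0 where i0: "i0 \<in> {1..r}" "a i0 \<noteq> 1" using ab(1) by auto
  have lgt: "l > r"
  proof -
    have "(\<Sum>k=1..r. (1::nat)) < (\<Sum>k=1..r. a k)"
      by (rule sum_strict_mono_ex1) (use assms(2) i0 in force)+
    then show ?thesis unfolding l_def by simp
  qed
  define u where "u = l - r"
  have u1: "u \<ge> 1" and lu: "l = Suc q + u" using lgt unfolding u_def rq by auto
  define m where "m = m_rl r l"
  define j where "j = real m - real (Suc q)"
  have Pm: "j \<ge> 0 \<and> 2*(real q+j)*(real q^2 - real u*j) - (real q+real u)*(real q+real u-1)*j \<ge> 0"
    using P_m[OF q1 u1 lu] unfolding j_def m_def rq .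
  have mj: "real m = real q + 1 + j" unfolding j_def by simp
  define T where "T = (\<Sum>k=1..r. real (a k) * (real (a k) - 1))"
  have lr: "real l = (\<Sum>k=1..r. real (a k))" unfolding l_def by simp
  have sq: "real (a k) ^ 2 \<le> (2 * real c + real D) * real (a k) - real c * (real c + real D)" if "k \<in> {1..r}" for k
  proof -
    have "(real (a k) - real c) * (real (a k) - real c - real D) \<le> 0"
      using bnd[OF that] by (intro mult_nonneg_nonpos) auto
    then show ?thesis by (simp add: algebra_simps power2_eq_square)
  qed
  have Tb: "T \<le> (2 * real c + real D - 1) * real l - real r * real c * (real c + real D)"
  proof -
    have "T = (\<Sum>k=1..r. real (a k) ^ 2) - (\<Sum>k=1..r. real (a k))"
      unfolding T_def by (simp add: sum_subtractf algebra_simps power2_eq_square)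
    also have "(\<Sum>k=1..r. real (a k) ^ 2) \<le> (\<Sum>k=1..r. (2 * real c + real D) * real (a k) - real c * (real c + real D))"
      by (rule sum_mono) (use sq in auto)
    also have "\<dots> = (2 * real c + real D) * real l - real r * (real c * (real c + real D))"
      unfolding lr by (simp add: sum_subtractf sum_distrib_left)
    finally show ?thesis unfolding lr by (simp add: algebra_simps)
  qed
  have main: "real m * T < real l * (real l - 1)"
  proof (cases "c = 1")
    case True
    then have "real D * (real D - 1) \<le> 0" using DD by simp
    then have "D \<le> 1"
    proof -
      assume h: "real D * (real D - 1) \<le> 0"
      show "D \<le> 1"
      proof (rule ccontr)
        assume "\<not> D \<le> 1"
        then have "real D \<ge> 2" by simp
        then have "real D * (real D - 1) \<ge> 2" using mult_mono[of 2 "real D" 1 "real D - 1"] by simp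
        then show False using h by simp
      qed
    qed
    then have "T \<le> 2 * real u"
    proof -
      have "T \<le> (1 + real D) * (real l - real r)" using Tb True by (simp add: algebra_simps)
      also have "\<dots> \<le> 2 * (real l - real r)" using \<open>D \<le> 1\<close> lgt by (intro mult_right_mono) auto
      finally show ?thesis unfolding u_def using lgt by (simp add: of_nat_diff)
    qed
    have cA: "2*real u*(real q+1+j) < (real q+1+real u)*(real q+real u)"
      by (rule core_A) (use q1 u1 Pm in auto)
    have T0: "T \<ge> 0" unfolding T_def using assms(2) by (intro sum_nonneg) auto
    have "real m * T \<le> real m * (2 * real u)" using \<open>T \<le> 2 * real u\<close> by (intro mult_left_mono) auto
    also have "\<dots> < real l * (real l - 1)" using cA unfolding mj lu by (simp add: algebra_simps)
    finally show ?thesis .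
  next
    case False
    then have c2: "c \<ge> 2" using c1 by simp
    have lrc: "real l \<ge> real r * real c"
    proof -
      have "(\<Sum>k=1..r. real c) \<le> (\<Sum>k=1..r. real (a k))" by (rule sum_mono) (use bnd in auto)
      then show ?thesis unfolding lr by simp
    qed
    have uq: "real u \<ge> real q + 1"
    proof -
      have "real r * real c \<ge> real r * 2" using c2 by (intro mult_left_mono) auto
      then show ?thesis using lrc unfolding u_def rq using lgt by (simp add: of_nat_diff)
    qed
    define K where "K = 16*real u^2 + 24*(real q+1)*real u + (real q+1)^2"
    have KT: "16 * real r * T \<le> K"
    proof -
      have "16 * real r * T \<le> 16 * real r * ((2 * real c + real D - 1) * real l - real r * real c * (real c + real D))"
        using Tb by (intro mult_left_mono) auto
      moreover have "K - 16 * real r * ((2 * real c + real D - 1) * real l - real r * real c * (real c + real D))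
          = (4*(real l - real r * real c) - real r * (2 * real D - 1))^2 + 4 * real r^2 * (2 * real c - 2 - real D * (real D - 1))"
      proof -
        have e1: "real u = real l - real r" unfolding u_def using lgt by (simp add: of_nat_diff)
        have e2: "real q + 1 = real r" unfolding rq by simp
        show ?thesis unfolding K_def e1 e2 by (rule KT_id)
      qed
      moreover have "4 * real r^2 * (2 * real c - 2 - real D * (real D - 1)) \<ge> 0" using DD by simp
      moreover have "(4*(real l - real r * real c) - real r * (2 * real D - 1))^2 \<ge> 0" by simp
      ultimately show ?thesis by linarith
    qed
    have cB: "(real q+1+j)*K < 16*(real q+1)*((real q+1+real u)*(real q+real u))"
      unfolding K_def by (rule core_B) (use q1 uq Pm in auto)
    have "16 * real r * (real m * T) = real m * (16 * real r * T)" by simp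
    also have "\<dots> \<le> real m * K" using KT by (intro mult_left_mono) auto
    also have "\<dots> < 16 * real r * (real l * (real l - 1))" using cB unfolding mj lu rq by (simp add: algebra_simps)
    finally show ?thesis using assms(1) by simp
  qed
  have "real (\<Sum>k=1..r. a k choose 2) = (\<Sum>k=1..r. real (a k) * (real (a k) - 1) / 2)"
    by (simp add: choose2_real)
  also have "\<dots> = T / 2" unfolding T_def by (rule sum_divide_distrib[symmetric])
  finally have "real (m * (\<Sum>k=1..r. a k choose 2)) = real m * T / 2" by simp
  also have "\<dots> < real l * (real l - 1) / 2" using main by simp
  also have "\<dots> = real (l choose 2)" by (simp add: choose2_real)
  finally have "m * (\<Sum>k=1..r. a k choose 2) < l choose 2" by (simp only: of_nat_less_iff)
  then show ?thesis unfolding m_def l_def .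
qed

end
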